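(* Assume $b>1$, $\gamma:=kd/m-\alpha>0$ and $M>d/m$. Let $(S_t,Q_t)$ be the solution of the deterministic non-delayed system \[ S_t'=\big[\alpha-k\sigma(Q_t)\big]S_t,\qquad Q_t'=d-mQ_t+k(b-1)\sigma(Q_t)S_t, \] with initial condition $(S_0,Q_0)\in\big[0,\tfrac{mM-d}{k(b-1)M}\big]\times[d/m,M]$. Then there is a constant $c>0$ such that for all $t\ge0$, \[ |(S_t,Q_t)-E_0|\le c\,e^{-\eta t},\qquad E_0=(0,d/m),\quad \eta=\gamma\wedge\tfrac m2 . \]
   Context: Parameters $\alpha,k,d,m,M$ are positive constants. $\sigma:\mathbb R_+\to\mathbb R_+$ is a $C^\infty$ function with $\sigma(x)=x$ for $0\le x\le M$, $\sigma(x)=M+1$ for $x>M+1$, and $0\le\sigma'(x)\le C$ for some constant $C>1$. $|\cdot|$ is the Euclidean norm. *)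

theory Defs
  imports "HOL-Analysis.Analysis"
begin

definition smooth_nonneg :: "(real \<Rightarrow> real) \<Rightarrow> bool" where
  "smooth_nonneg f \<longleftrightarrow> (\<exists>D :: nat \<Rightarrow> real \<Rightarrow> real. D 0 = f \<and>
     (\<forall>n x. x \<ge> 0 \<longrightarrow> (D n has_real_derivative D (Suc n) x) (at x within {0..})))"

end

theory Submission imports Defs begin

lemma aux_ring: "(X::real)*E1 + q*(E1*c) - B*(E2*h) = (X + q*c)*E1 - B*h*E2"
  by (simp add: algebra_simps)

lemma nonincr:
  fixes f f' :: "real \<Rightarrow> real"
  assumes "0 \<le> a" "a \<le> b"
  and d: "\<And>t. a \<le> t \<Longrightarrow> t \<le> b \<Longrightarrow> (f has_real_derivative f' t) (at t within {0..})"
  and n: "\<And>t. a \<le> t \<Longrightarrow> t \<le> b \<Longrightarrow> f' t \<le> 0"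
  shows "f b \<le> f a"
proof -
  have "\<exists>x\<in>{a..b}. f b - f a = (\<lambda>h. f' x * h) (b - a)"
  proof (rule mvt_very_simple[OF assms(2)])
    fix x assume "a \<le> x" "x \<le> b"
    then have "(f has_real_derivative f' x) (at x within {a..b})"
      using d assms(1) by (meson DERIV_subset atLeastAtMost_iff atLeast_iff subsetI order_trans)
    then show "(f has_derivative (\<lambda>h. f' x * h)) (at x within {a..b})"
      by (simp add: has_field_derivative_def)
  qed
  then obtain x where "x \<in> {a..b}" "f b - f a = f' x * (b - a)" by auto
  moreover have "f' x * (b - a) \<le> 0" using n[of x] \<open>x \<in> {a..b}\<close> assms(2)
    by (simp add: mult_nonpos_nonneg)
  ultimately show ?thesis by simp
qed

lemma nondecr:
  fixes f f' :: "real \<Rightarrow> real"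
  assumes "0 \<le> a" "a \<le> b"
  and d: "\<And>t. a \<le> t \<Longrightarrow> t \<le> b \<Longrightarrow> (f has_real_derivative f' t) (at t within {0..})"
  and n: "\<And>t. a \<le> t \<Longrightarrow> t \<le> b \<Longrightarrow> f' t \<ge> 0"
  shows "f a \<le> f b"
proof -
  have "(\<lambda>t. - f t) b \<le> (\<lambda>t. - f t) a"
    by (rule nonincr[OF assms(1,2), where f'="\<lambda>t. - f' t"]) (auto intro!: derivative_eq_intros d n)
  then show ?thesis by simp
qed

theorem mainTheorem5:
  fixes \<alpha> k d m M b C :: real
    and \<sigma> S Q :: "real \<Rightarrow> real"
  assumes pos: "\<alpha> > 0" "k > 0" "d > 0" "m > 0" "M > 0"
    and sigma_smooth: "smooth_nonneg \<sigma>"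
    and sigma_range: "\<forall>x\<ge>0. \<sigma> x \<ge> 0"
    and sigma_id: "\<forall>x. 0 \<le> x \<and> x \<le> M \<longrightarrow> \<sigma> x = x"
    and sigma_const: "\<forall>x. x > M + 1 \<longrightarrow> \<sigma> x = M + 1"
    and C_gt: "C > 1"
    and sigma_deriv: "\<forall>x\<ge>0. \<exists>s. (\<sigma> has_real_derivative s) (at x within {0..}) \<and> 0 \<le> s \<and> s \<le> C"
    and b_gt: "b > 1"
    and gamma_pos: "k * d / m - \<alpha> > 0"
    and M_gt: "M > d / m"
    and S_ode: "\<forall>t\<ge>0. (S has_real_derivative (\<alpha> - k * \<sigma> (Q t)) * S t) (at t within {0..})"
    and Q_ode: "\<forall>t\<ge>0. (Q has_real_derivative d - m * Q t + k * (b - 1) * \<sigma> (Q t) * S t) (at t within {0..})"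
    and S0: "0 \<le> S 0" "S 0 \<le> (m * M - d) / (k * (b - 1) * M)"
    and Q0: "d / m \<le> Q 0" "Q 0 \<le> M"
  shows "\<exists>c>0. \<forall>t\<ge>0. norm ((S t, Q t) - (0, d / m))
            \<le> c * exp (- (min (k * d / m - \<alpha>) (m / 2)) * t)"
proof -
  define \<gamma> where "\<gamma> = k * d / m - \<alpha>"
  define \<eta> where "\<eta> = min \<gamma> (m / 2)"
  have gp: "\<gamma> > 0" using gamma_pos by (simp add: \<gamma>_def)
  have Sd: "\<And>t. 0 \<le> t \<Longrightarrow> (S has_real_derivative (\<alpha> - k * \<sigma> (Q t)) * S t) (at t within {0..})"
    using S_ode by auto
  have Qd: "\<And>t. 0 \<le> t \<Longrightarrow> (Q has_real_derivative d - m * Q t + k * (b - 1) * \<sigma> (Q t) * S t) (at t within {0..})"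
    using Q_ode by auto
  have Scont: "continuous_on {a..b'} S" if "0 \<le> a" for a b'
    unfolding continuous_on_eq_continuous_within
    using Sd that by (meson DERIV_continuous DERIV_subset atLeastAtMost_iff atLeast_iff order_trans subsetI)
  have Qcont: "continuous_on {a..b'} Q" if "0 \<le> a" for a b'
    unfolding continuous_on_eq_continuous_within
    using Qd that by (meson DERIV_continuous DERIV_subset atLeastAtMost_iff atLeast_iff order_trans subsetI)
  from sigma_deriv obtain sd where sd: "\<And>x. x \<ge> 0 \<Longrightarrow> (\<sigma> has_real_derivative sd x) (at x within {0..}) \<and> 0 \<le> sd x"
    by metis
  have sig_mono: "\<sigma> x \<le> \<sigma> y" if "0 \<le> x" "x \<le> y" for x y
    by (rule nondecr[OF that, where f'=sd]) (use sd that in auto)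
  have sig_le: "\<sigma> x \<le> M + 1" if "0 \<le> x" for x
  proof (cases "x \<le> M + 2")
    case True
    then have "\<sigma> x \<le> \<sigma> (M + 2)" using sig_mono that by auto
    also have "\<sigma> (M + 2) = M + 1" using sigma_const by auto
    finally show ?thesis .
  next
    case False then show ?thesis using sigma_const by auto
  qed
  have sig_ge: "\<sigma> x \<ge> d / m" if "d / m \<le> x" for x
  proof -
    have "0 \<le> d / m" using pos by auto
    then have "\<sigma> (d / m) = d / m" using sigma_id M_gt by auto
    then show ?thesis using sig_mono[OF \<open>0 \<le> d / m\<close> that] by simp
  qed

  have K1: "\<forall>s\<in>{0..T}. S s \<ge> 0" if T0: "0 \<le> T" and hQ: "\<forall>s\<in>{0..T}. Q s \<ge> 0" for T
  proof (cases "S 0 = 0")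
    case True
    show ?thesis
    proof
      fix t assume t: "t \<in> {0..T}"
      have "(\<lambda>t. S t ^ 2 * exp (- 2 * \<alpha> * t)) t \<le> (\<lambda>t. S t ^ 2 * exp (- 2 * \<alpha> * t)) 0"
      proof (rule nonincr[where f="\<lambda>t. S t ^ 2 * exp (- 2 * \<alpha> * t)" and f'="\<lambda>t. 2 * S t * ((\<alpha> - k * \<sigma> (Q t)) * S t) * exp (- 2 * \<alpha> * t) + S t ^ 2 * (exp (- 2 * \<alpha> * t) * (- 2 * \<alpha>))"])
        show "0 \<le> (0::real)" "0 \<le> t" using t by auto
      next
        fix u assume u: "0 \<le> u" "u \<le> t"
        show "((\<lambda>t. S t ^ 2 * exp (- 2 * \<alpha> * t)) has_real_derivative 2 * S u * ((\<alpha> - k * \<sigma> (Q u)) * S u) * exp (- 2 * \<alpha> * u) + S u ^ 2 * (exp (- 2 * \<alpha> * u) * (- 2 * \<alpha>))) (at u within {0..})"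
          by (rule derivative_eq_intros Sd[OF u(1)] refl | simp)+
        have "Q u \<ge> 0" using hQ u t by auto
        then have "\<sigma> (Q u) \<ge> 0" using sigma_range by auto
        have "2 * S u * ((\<alpha> - k * \<sigma> (Q u)) * S u) * exp (- 2 * \<alpha> * u) + S u ^ 2 * (exp (- 2 * \<alpha> * u) * (- 2 * \<alpha>))
           = - (2 * k * \<sigma> (Q u) * S u ^ 2 * exp (- 2 * \<alpha> * u))" by (simp add: algebra_simps power2_eq_square)
        also have "\<dots> \<le> 0" using \<open>\<sigma> (Q u) \<ge> 0\<close> pos by simp
        finally show "2 * S u * ((\<alpha> - k * \<sigma> (Q u)) * S u) * exp (- 2 * \<alpha> * u) + S u ^ 2 * (exp (- 2 * \<alpha> * u) * (- 2 * \<alpha>)) \<le> 0" .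
      qed
      then have "S t ^ 2 * exp (- 2 * \<alpha> * t) \<le> 0" using True by simp
      then have "S t ^ 2 \<le> 0" by (simp add: mult_le_0_iff)
      then show "S t \<ge> 0" by simp
    qed
  next
    case False
    then have S0p: "S 0 > 0" using S0 by auto
    define L where "L = k * (M + 1)"
    have g: "S t ^ 2 * exp (2 * L * t) \<ge> S 0 ^ 2" if t: "t \<in> {0..T}" for t
    proof -
      have "(\<lambda>t. S t ^ 2 * exp (2 * L * t)) 0 \<le> (\<lambda>t. S t ^ 2 * exp (2 * L * t)) t"
      proof (rule nondecr[where f="\<lambda>t. S t ^ 2 * exp (2 * L * t)" and f'="\<lambda>t. 2 * S t * ((\<alpha> - k * \<sigma> (Q t)) * S t) * exp (2 * L * t) + S t ^ 2 * (exp (2 * L * t) * (2 * L))"])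
        show "0 \<le> (0::real)" "0 \<le> t" using t by auto
      next
        fix u assume u: "0 \<le> u" "u \<le> t"
        show "((\<lambda>t. S t ^ 2 * exp (2 * L * t)) has_real_derivative 2 * S u * ((\<alpha> - k * \<sigma> (Q u)) * S u) * exp (2 * L * u) + S u ^ 2 * (exp (2 * L * u) * (2 * L))) (at u within {0..})"
          by (rule derivative_eq_intros Sd[OF u(1)] refl | simp)+
        have "Q u \<ge> 0" using hQ u t by auto
        then have "\<sigma> (Q u) \<le> M + 1" using sig_le by auto
        then have "k * \<sigma> (Q u) \<le> L" unfolding L_def using pos by simp
        have "2 * S u * ((\<alpha> - k * \<sigma> (Q u)) * S u) * exp (2 * L * u) + S u ^ 2 * (exp (2 * L * u) * (2 * L))
           = 2 * (\<alpha> + (L - k * \<sigma> (Q u))) * (S u ^ 2 * exp (2 * L * u))" by (simp add: algebra_simps power2_eq_square)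
        also have "\<dots> \<ge> 0" using \<open>k * \<sigma> (Q u) \<le> L\<close> pos by simp
        finally show "2 * S u * ((\<alpha> - k * \<sigma> (Q u)) * S u) * exp (2 * L * u) + S u ^ 2 * (exp (2 * L * u) * (2 * L)) \<ge> 0" .
      qed
      then show ?thesis by simp
    qed
    show ?thesis
    proof (rule ccontr)
      assume "\<not> (\<forall>s\<in>{0..T}. S s \<ge> 0)"
      then obtain t where t: "t \<in> {0..T}" "S t < 0" by auto
      obtain x where x: "0 \<le> x" "x \<le> t" "S x = 0"
        using IVT2'[of S t 0 0] t S0p Scont[of 0 t] by auto
      have "x \<in> {0..T}" using x t by auto
      from g[OF this] x S0p show False by simp
    qed
  qed

  have K2: "\<forall>s\<in>{0..T}. Q s \<ge> d / m" if T0: "0 \<le> T" and hQ: "\<forall>s\<in>{0..T}. Q s \<ge> 0" for T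
  proof
    fix t assume t: "t \<in> {0..T}"
    have Sn: "\<forall>s\<in>{0..T}. S s \<ge> 0" using K1 T0 hQ by blast
    have "(\<lambda>t. (Q t - d / m) * exp (m * t)) 0 \<le> (\<lambda>t. (Q t - d / m) * exp (m * t)) t"
    proof (rule nondecr[where f="\<lambda>t. (Q t - d / m) * exp (m * t)" and f'="\<lambda>t. (d - m * Q t + k * (b - 1) * \<sigma> (Q t) * S t) * exp (m * t) + (Q t - d / m) * (exp (m * t) * m)"])
      show "0 \<le> (0::real)" "0 \<le> t" using t by auto
    next
      fix u assume u: "0 \<le> u" "u \<le> t"
      show "((\<lambda>t. (Q t - d / m) * exp (m * t)) has_real_derivative (d - m * Q u + k * (b - 1) * \<sigma> (Q u) * S u) * exp (m * u) + (Q u - d / m) * (exp (m * u) * m)) (at u within {0..})"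
        by (rule derivative_eq_intros Qd[OF u(1)] refl | simp)+
      have "Q u \<ge> 0" "S u \<ge> 0" using hQ Sn u t by auto
      then have "\<sigma> (Q u) \<ge> 0" using sigma_range by auto
      have "(d - m * Q u + k * (b - 1) * \<sigma> (Q u) * S u) * exp (m * u) + (Q u - d / m) * (exp (m * u) * m)
         = k * (b - 1) * \<sigma> (Q u) * S u * exp (m * u)" using pos by (simp add: algebra_simps)
      also have "\<dots> \<ge> 0" using \<open>\<sigma> (Q u) \<ge> 0\<close> \<open>S u \<ge> 0\<close> pos b_gt by simp
      finally show "(d - m * Q u + k * (b - 1) * \<sigma> (Q u) * S u) * exp (m * u) + (Q u - d / m) * (exp (m * u) * m) \<ge> 0" .
    qed
    then have "0 \<le> (Q t - d / m) * exp (m * t)" using Q0 by simp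
    then show "Q t \<ge> d / m" by (simp add: zero_le_mult_iff)
  qed
  have Qnn: "Q t \<ge> 0" if t: "0 \<le> t" for t
  proof (rule ccontr)
    assume "\<not> Q t \<ge> 0"
    then have Qt: "Q t < 0" by simp
    define Z where "Z = {0..t} \<inter> Q -` {..d / (2 * m)}"
    have dm: "0 < d / (2 * m)" "d / (2 * m) < d / m" using pos by (auto simp: field_simps)
    have Zne: "Z \<noteq> {}" using t Qt dm unfolding Z_def by auto
    have Zcl: "closed Z" unfolding Z_def by (rule continuous_closed_preimage) (use Qcont in auto)
    have Zbd: "bdd_below Z" unfolding Z_def by (rule bdd_belowI[of _ 0]) auto
    define t1 where "t1 = Inf Z"
    have t1Z: "t1 \<in> Z" unfolding t1_def by (rule closed_contains_Inf[OF Zne Zbd Zcl])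
    have low: "t1 \<le> s" if "s \<in> Z" for s unfolding t1_def by (rule cInf_lower[OF that Zbd])
    have t1r: "0 \<le> t1" "t1 \<le> t" "Q t1 \<le> d / (2 * m)" using t1Z unfolding Z_def by auto
    have hQ: "\<forall>s\<in>{0..t1}. Q s \<ge> 0"
    proof
      fix s assume s: "s \<in> {0..t1}"
      show "Q s \<ge> 0"
      proof (cases "Q s \<le> d / (2 * m)")
        case True
        then have "s \<in> Z" using s t1r unfolding Z_def by auto
        then have "s = t1" using low s by force
        obtain x where x: "0 \<le> x" "x \<le> t1" "Q x = d / (2 * m)"
          using IVT2'[of Q t1 "d / (2 * m)" 0] t1r dm Q0 Qcont[of 0 t1] by auto
        then have "x \<in> Z" using t1r unfolding Z_def by auto
        then have "x = t1" using low x by force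
        then show ?thesis using x dm \<open>s = t1\<close> by simp
      next
        case False then show ?thesis using dm by simp
      qed
    qed
    have "Q t1 \<ge> d / m" using K2[OF t1r(1) hQ] t1r by auto
    then show False using t1r dm by simp
  qed
  have Qge: "Q t \<ge> d / m" if "0 \<le> t" for t using K2[of t] Qnn that by auto
  have Sge: "S t \<ge> 0" if "0 \<le> t" for t using K1[of t] Qnn that by auto

  have Sb: "S t \<le> S 0 * exp (- \<gamma> * t)" if t: "0 \<le> t" for t
  proof -
    have "(\<lambda>t. S t * exp (\<gamma> * t)) t \<le> (\<lambda>t. S t * exp (\<gamma> * t)) 0"
    proof (rule nonincr[where f="\<lambda>t. S t * exp (\<gamma> * t)" and f'="\<lambda>t. (\<alpha> - k * \<sigma> (Q t)) * S t * exp (\<gamma> * t) + S t * (exp (\<gamma> * t) * \<gamma>)"])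
      show "0 \<le> (0::real)" "0 \<le> t" using t by auto
    next
      fix u assume u: "0 \<le> u" "u \<le> t"
      show "((\<lambda>t. S t * exp (\<gamma> * t)) has_real_derivative (\<alpha> - k * \<sigma> (Q u)) * S u * exp (\<gamma> * u) + S u * (exp (\<gamma> * u) * \<gamma>)) (at u within {0..})"
        by (rule derivative_eq_intros Sd[OF u(1)] refl | simp)+
      have "\<sigma> (Q u) \<ge> d / m" "S u \<ge> 0" using sig_ge Qge Sge u by auto
      have "(\<alpha> - k * \<sigma> (Q u)) * S u * exp (\<gamma> * u) + S u * (exp (\<gamma> * u) * \<gamma>)
         = k * (d / m - \<sigma> (Q u)) * (S u * exp (\<gamma> * u))" unfolding \<gamma>_def by (simp add: algebra_simps)
      also have "\<dots> \<le> 0"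
      proof (rule mult_nonpos_nonneg)
        show "k * (d / m - \<sigma> (Q u)) \<le> 0" using \<open>\<sigma> (Q u) \<ge> d / m\<close> pos by (simp add: mult_nonneg_nonpos)
        show "0 \<le> S u * exp (\<gamma> * u)" using \<open>S u \<ge> 0\<close> by simp
      qed
      finally show "(\<alpha> - k * \<sigma> (Q u)) * S u * exp (\<gamma> * u) + S u * (exp (\<gamma> * u) * \<gamma>) \<le> 0" .
    qed
    then have "S t * exp (\<gamma> * t) \<le> S 0" by simp
    then have "S t * exp (\<gamma> * t) * exp (- \<gamma> * t) \<le> S 0 * exp (- \<gamma> * t)" by simp
    then show ?thesis by (simp add: mult.assoc exp_add[symmetric])
  qed
  define K where "K = k * (b - 1) * (M + 1) * S 0"
  define B where "B = max (Q 0 - d / m) (2 * K / m)"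
  have K0: "K \<ge> 0" unfolding K_def using pos b_gt S0 by simp
  have KB: "K \<le> B * (m / 2)"
  proof -
    have "2 * K / m \<le> B" unfolding B_def by simp
    then have "2 * K / m * (m / 2) \<le> B * (m / 2)" using pos by (intro mult_right_mono) auto
    then show ?thesis using pos by simp
  qed
  have eta: "\<eta> \<le> \<gamma>" "\<eta> \<le> m / 2" unfolding \<eta>_def by auto
  have Qb: "Q t - d / m \<le> B * exp (- \<eta> * t)" if t: "0 \<le> t" for t
  proof -
    define G where "G = (\<lambda>t. (Q t - d / m) * exp ((\<eta> + m / 2) * t) - B * exp (m / 2 * t))"
    define G' where "G' = (\<lambda>t. (d - m * Q t + k * (b - 1) * \<sigma> (Q t) * S t) * exp ((\<eta> + m / 2) * t)
        + (Q t - d / m) * (exp ((\<eta> + m / 2) * t) * (\<eta> + m / 2)) - B * (exp (m / 2 * t) * (m / 2)))"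
    have "G t \<le> G 0"
    proof (rule nonincr[where f=G and f'=G'])
      show "0 \<le> (0::real)" "0 \<le> t" using t by auto
    next
      fix u assume u: "0 \<le> u" "u \<le> t"
      show "(G has_real_derivative G' u) (at u within {0..})" unfolding G_def G'_def
        by (rule derivative_eq_intros Qd[OF u(1)] refl | simp)+
      have qu: "Q u - d / m \<ge> 0" using Qge u by auto
      have su: "S u \<ge> 0" "\<sigma> (Q u) \<le> M + 1" using Sge sig_le Qnn u by auto
      have "(d - m * Q u + k * (b - 1) * \<sigma> (Q u) * S u) + (Q u - d / m) * (\<eta> + m / 2)
          = (\<eta> - m / 2) * (Q u - d / m) + k * (b - 1) * \<sigma> (Q u) * S u" using pos by (simp add: field_simps)
      also have "\<dots> \<le> k * (b - 1) * \<sigma> (Q u) * S u" using eta qu by (simp add: mult_nonpos_nonneg)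
      also have "\<dots> \<le> k * (b - 1) * (M + 1) * S u" using su pos b_gt
        by (intro mult_right_mono mult_left_mono) auto
      also have "\<dots> \<le> k * (b - 1) * (M + 1) * (S 0 * exp (- \<gamma> * u))" using Sb[OF u(1)] pos b_gt M_gt
        by (intro mult_left_mono) auto
      also have "\<dots> = K * exp (- \<gamma> * u)" unfolding K_def by simp
      finally have A: "(d - m * Q u + k * (b - 1) * \<sigma> (Q u) * S u) + (Q u - d / m) * (\<eta> + m / 2) \<le> K * exp (- \<gamma> * u)" .
      have "G' u = ((d - m * Q u + k * (b - 1) * \<sigma> (Q u) * S u) + (Q u - d / m) * (\<eta> + m / 2)) * exp ((\<eta> + m / 2) * u)
          - B * (m / 2) * exp (m / 2 * u)" unfolding G'_def by (rule aux_ring)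
      also have "\<dots> \<le> K * exp (- \<gamma> * u) * exp ((\<eta> + m / 2) * u) - B * (m / 2) * exp (m / 2 * u)"
        using A by (intro diff_right_mono mult_right_mono) auto
      also have "\<dots> \<le> K * exp (m / 2 * u) - B * (m / 2) * exp (m / 2 * u)"
      proof -
        have "K * exp (- \<gamma> * u) * exp ((\<eta> + m / 2) * u) = K * exp ((\<eta> - \<gamma>) * u + m / 2 * u)"
          by (simp add: mult.assoc exp_add[symmetric] algebra_simps)
        also have "\<dots> \<le> K * exp (m / 2 * u)" using K0 eta u
          by (intro mult_left_mono) (auto simp: mult_nonpos_nonneg)
        finally show ?thesis by simp
      qed
      also have "\<dots> = (K - B * (m / 2)) * exp (m / 2 * u)"
        by (simp add: algebra_simps)
      also have "\<dots> \<le> 0" using KB by (simp add: mult_nonpos_nonneg)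
      finally show "G' u \<le> 0" .
    qed
    also have "G 0 \<le> 0" unfolding G_def B_def by simp
    finally have "(Q t - d / m) * exp ((\<eta> + m / 2) * t) \<le> B * exp (m / 2 * t)" unfolding G_def by simp
    then have "(Q t - d / m) * exp ((\<eta> + m / 2) * t) * exp (- (\<eta> + m / 2) * t) \<le> B * exp (m / 2 * t) * exp (- (\<eta> + m / 2) * t)"
      by simp
    also have "B * exp (m / 2 * t) * exp (- (\<eta> + m / 2) * t) = B * exp (- \<eta> * t)"
      by (simp add: mult.assoc exp_add[symmetric] algebra_simps)
    finally show ?thesis by (simp add: mult.assoc exp_add[symmetric] algebra_simps)
  qed
  show ?thesis
  proof (intro exI[of _ "S 0 + B + 1"] conjI allI impI)
    have "B \<ge> 0" unfolding B_def using K0 pos by (simp add: le_max_iff_disj)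
    then show "S 0 + B + 1 > 0" using S0 by simp
    fix t :: real assume t: "0 \<le> t"
    have "norm ((S t, Q t) - (0, d / m)) = norm (S t, Q t - d / m)" by simp
    also have "\<dots> \<le> norm (S t) + norm (Q t - d / m)" by (rule norm_Pair_le)
    also have "\<dots> = S t + (Q t - d / m)" using Sge Qge t by simp
    also have "\<dots> \<le> S 0 * exp (- \<gamma> * t) + B * exp (- \<eta> * t)" using Sb Qb t by (intro add_mono) auto
    also have "S 0 * exp (- \<gamma> * t) \<le> S 0 * exp (- \<eta> * t)" using S0 eta t
      by (intro mult_left_mono) (auto simp: mult_right_mono)
    also have "S 0 * exp (- \<eta> * t) + B * exp (- \<eta> * t) \<le> (S 0 + B + 1) * exp (- \<eta> * t)"
      by (simp add: algebra_simps)
    finally show "norm ((S t, Q t) - (0, d / m)) \<le> (S 0 + B + 1) * exp (- min (k * d / m - \<alpha>) (m / 2) * t)"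
      unfolding \<eta>_def \<gamma>_def by simp
  qed
qed

end
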